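(* Assume $n_1,n_2\in(0,4)$ and (IE). Then for all $\varepsilon\in(0,1)$ and any $t\in(0,T_{max,\varepsilon})$, $$\frac12\frac{d}{dt}\int_\Omega u_{\varepsilon x}^2+\varepsilon\int_\Omega\frac{u_\varepsilon^4}{u_\varepsilon^{4-n_1}+\varepsilon}u_{\varepsilon xxx}^2+\frac{D_1}{2}\int_\Omega u_{\varepsilon xx}^2\le\chi_1\int_\Omega\Big(\frac{u_\varepsilon^{5-n_1}}{u_\varepsilon^{4-n_1}+\varepsilon}v_{\varepsilon x}\Big)_xu_{\varepsilon xx}+3\lambda_1\int_\Omega u_{\varepsilon x}^2+\frac{a_1^2}{2D_1}\int_\Omega u_\varepsilon^2v_\varepsilon^2$$ and $$\frac12\frac{d}{dt}\int_\Omega v_{\varepsilon x}^2+\varepsilon\int_\Omega\frac{v_\varepsilon^4}{v_\varepsilon^{4-n_2}+\varepsilon}v_{\varepsilon xxx}^2+\frac{D_2}{2}\int_\Omega v_{\varepsilon xx}^2\le-\chi_2\int_\Omega\Big(\frac{v_\varepsilon^{5-n_2}}{v_\varepsilon^{4-n_2}+\varepsilon}u_{\varepsilon x}\Big)_xv_{\varepsilon xx}+3\lambda_2\int_\Omega v_{\varepsilon x}^2+\frac{a_2^2}{2D_2}\int_\Omega u_\varepsilon^2v_\varepsilon^2.$$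
   Context: Let $\Omega\subset\mathbb{R}$ be a bounded open interval, $D_i,a_i,\lambda_i,\chi_i>0$ ($i=1,2$), and fix $\alpha\in(0,\frac12]$. Assumption (IE): $u_0,v_0\in W^{1,2}(\Omega)$ with $u_0>0,v_0>0$ in $\overline\Omega$; for each $\varepsilon\in(0,1)$, $u_{0\varepsilon},v_{0\varepsilon}\in C^5(\overline\Omega)$ with $u_{0\varepsilon x}=u_{0\varepsilon xxx}=v_{0\varepsilon x}=v_{0\varepsilon xxx}=0$ on $\partial\Omega$; $\frac12\inf_\Omega u_0\le u_{0\varepsilon}\le u_0+1$, $\frac12\inf_\Omega v_0\le v_{0\varepsilon}\le v_0+1$ in $\Omega$; $\int_\Omega u_{0\varepsilon x}^2\le\int_\Omega u_{0x}^2+1$, $\int_\Omega v_{0\varepsilon x}^2\le\int_\Omega v_{0x}^2+1$; $u_{0\varepsilon}\to u_0$, $v_{0\varepsilon}\to v_0$ a.e. as $\varepsilon\searrow0$. Approximating problem: $u_t=-\varepsilon\big(\frac{u^4}{u^{4-n_1}+\varepsilon}u_{xxx}\big)_x+\varepsilon^{\alpha/2}(u^{-\alpha}u_x)_x+D_1u_{xx}-\chi_1\big(\frac{u^{5-n_1}}{u^{4-n_1}+\varepsilon}v_x\big)_x+\frac{3u^3}{3u^2+\varepsilon}(\lambda_1-u+a_1v)$, $v_t=-\varepsilon\big(\frac{v^4}{v^{4-n_2}+\varepsilon}v_{xxx}\big)_x+\varepsilon^{\alpha/2}(v^{-\alpha}v_x)_x+D_2v_{xx}+\chi_2\big(\frac{v^{5-n_2}}{v^{4-n_2}+\varepsilon}u_x\big)_x+\frac{3v^3}{3v^2+\varepsilon}(\lambda_2-v-a_2u)$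 in $\Omega\times(0,\infty)$, $u_x=v_x=u_{xxx}=v_{xxx}=0$ on $\partial\Omega$, $u(\cdot,0)=u_{0\varepsilon}$, $v(\cdot,0)=v_{0\varepsilon}$. For $n_i\in(0,4)$ and each $\varepsilon$ it has a classical solution $(u_\varepsilon,v_\varepsilon)$, positive in $\overline\Omega\times[0,T_{max,\varepsilon})$, belonging to $\bigcap_{s\in(3/2,2)}C^0([0,T_{max,\varepsilon});W^{s,2}(\Omega))\cap C^{4,1}(\overline\Omega\times(0,T_{max,\varepsilon}))$, where $T_{max,\varepsilon}\in(0,\infty]$ is maximal: either $T_{max,\varepsilon}=\infty$ or $\limsup_{t\nearrow T_{max,\varepsilon}}\{\|u_\varepsilon(\cdot,t)\|_{W^{2,2}}+\|1/u_\varepsilon(\cdot,t)\|_{L^\infty}+\|v_\varepsilon(\cdot,t)\|_{W^{2,2}}+\|1/v_\varepsilon(\cdot,t)\|_{L^\infty}\}=\infty$. *)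

theory Defs
  imports "HOL-Analysis.Analysis"
begin

text \<open>Omega = the open interval {lo<..<hi}, closure {lo..hi}.
  Functions of space and time are written u x t.\<close>

text \<open>d 0, ..., d K are the successive derivatives (one-sided at the endpoints)
  of d 0 on the closed interval, all continuous there: d 0 is in C^K of the closure.\<close>
definition derivs_on :: "real \<Rightarrow> real \<Rightarrow> nat \<Rightarrow> (nat \<Rightarrow> real \<Rightarrow> real) \<Rightarrow> bool" where
  "derivs_on lo hi K d \<longleftrightarrow>
     (\<forall>k<K. \<forall>x\<in>{lo..hi}. (d k has_real_derivative d (Suc k) x) (at x within {lo..hi})) \<and>
     (\<forall>k\<le>K. continuous_on {lo..hi} (d k))"

text \<open>f belongs to W^{1,2}(lo,hi) (continuous representative), with weak derivative g.\<close>
definition W12_on :: "real \<Rightarrow> real \<Rightarrow> (real \<Rightarrow> real) \<Rightarrow> (real \<Rightarrow> real) \<Rightarrow> bool" where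
  "W12_on lo hi f g \<longleftrightarrow>
     g integrable_on {lo..hi} \<and> (\<lambda>x. (g x)\<^sup>2) integrable_on {lo..hi} \<and>
     (\<forall>x\<in>{lo..hi}. f x = f lo + integral {lo..x} g)"

text \<open>Assumption (IE) for one component: initial datum w0 (with weak derivative w0'),
  and the approximating family w0e eps.\<close>
definition IE_component :: "real \<Rightarrow> real \<Rightarrow> (real \<Rightarrow> real) \<Rightarrow> (real \<Rightarrow> real)
    \<Rightarrow> (real \<Rightarrow> real \<Rightarrow> real) \<Rightarrow> bool" where
  "IE_component lo hi w0 w0' w0e \<longleftrightarrow>
     W12_on lo hi w0 w0' \<and> (\<forall>x\<in>{lo..hi}. w0 x > 0) \<and>
     (\<forall>e\<in>{0<..<1}. \<exists>d. d 0 = w0e e \<and> derivs_on lo hi 5 d \<and>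
        d 1 lo = 0 \<and> d 1 hi = 0 \<and> d 3 lo = 0 \<and> d 3 hi = 0 \<and>
        (\<forall>x\<in>{lo<..<hi}. Inf (w0 ` {lo<..<hi}) / 2 \<le> w0e e x \<and> w0e e x \<le> w0 x + 1) \<and>
        integral {lo..hi} (\<lambda>x. (d 1 x)\<^sup>2) \<le> integral {lo..hi} (\<lambda>x. (w0' x)\<^sup>2) + 1) \<and>
     (AE x in lebesgue_on {lo<..<hi}. ((\<lambda>e. w0e e x) \<longlongrightarrow> w0 x) (at_right 0))"

text \<open>u is in C^{4,1}(closure Omega \<times> (0,T)) with x-derivatives ux, uxx, uxxx, uxxxx
  (one-sided at the endpoints) and time derivative ut.\<close>
definition C41_on :: "real \<Rightarrow> real \<Rightarrow> real \<Rightarrow> (real \<Rightarrow> real \<Rightarrow> real) \<Rightarrow> (real \<Rightarrow> real \<Rightarrow> real)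
    \<Rightarrow> (real \<Rightarrow> real \<Rightarrow> real) \<Rightarrow> (real \<Rightarrow> real \<Rightarrow> real) \<Rightarrow> (real \<Rightarrow> real \<Rightarrow> real)
    \<Rightarrow> (real \<Rightarrow> real \<Rightarrow> real) \<Rightarrow> bool" where
  "C41_on lo hi T u ux uxx uxxx uxxxx ut \<longleftrightarrow>
     (\<forall>t\<in>{0<..<T}. \<forall>x\<in>{lo..hi}.
        ((\<lambda>y. u y t) has_real_derivative ux x t) (at x within {lo..hi}) \<and>
        ((\<lambda>y. ux y t) has_real_derivative uxx x t) (at x within {lo..hi}) \<and>
        ((\<lambda>y. uxx y t) has_real_derivative uxxx x t) (at x within {lo..hi}) \<and>
        ((\<lambda>y. uxxx y t) has_real_derivative uxxxx x t) (at x within {lo..hi}) \<and>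
        ((\<lambda>s. u x s) has_real_derivative ut x t) (at t)) \<and>
     (\<forall>f\<in>{u, ux, uxx, uxxx, uxxxx, ut}.
        continuous_on ({lo..hi} \<times> {0<..<T}) (\<lambda>(x, t). f x t))"

text \<open>Flux (so that the equation reads w_t = (flux)_x + reaction) of one component of the
  approximating problem; sg = -1 for the u-equation (-chi_1) and sg = 1 for the v-equation.\<close>
definition approx_flux :: "real \<Rightarrow> real \<Rightarrow> real \<Rightarrow> real \<Rightarrow> real \<Rightarrow> real
    \<Rightarrow> real \<Rightarrow> real \<Rightarrow> real \<Rightarrow> real \<Rightarrow> real" where
  "approx_flux e alpha n D chi sg w wx wxxx zx =
     - e * (w ^ 4 / (w powr (4 - n) + e) * wxxx)
     + e powr (alpha / 2) * (w powr (- alpha) * wx)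
     + D * wx
     + sg * chi * (w powr (5 - n) / (w powr (4 - n) + e) * zx)"

definition approx_reaction :: "real \<Rightarrow> real \<Rightarrow> real \<Rightarrow> real" where
  "approx_reaction e w r = 3 * w ^ 3 / (3 * w\<^sup>2 + e) * r"

definition approx_solution ::
  "real \<Rightarrow> real \<Rightarrow> real \<Rightarrow> real \<Rightarrow> real \<Rightarrow> real \<Rightarrow> real \<Rightarrow> real \<Rightarrow> real \<Rightarrow> real \<Rightarrow> real \<Rightarrow> real \<Rightarrow> real \<Rightarrow> real \<Rightarrow> real \<Rightarrow> 
   (real \<Rightarrow> real) \<Rightarrow> (real \<Rightarrow> real) \<Rightarrow>
   (real \<Rightarrow> real \<Rightarrow> real) \<Rightarrow> (real \<Rightarrow> real \<Rightarrow> real) \<Rightarrow> (real \<Rightarrow> real \<Rightarrow> real) \<Rightarrow> (real \<Rightarrow> real \<Rightarrow> real) \<Rightarrow> (real \<Rightarrow> real \<Rightarrow> real) \<Rightarrow> (real \<Rightarrow> real \<Rightarrow> real) \<Rightarrow> (real \<Rightarrow> real \<Rightarrow> real) \<Rightarrow> (real \<Rightarrow> real \<Rightarrow> real) \<Rightarrow> (real \<Rightarrow> real \<Rightarrow> real) \<Rightarrow> (real \<Rightarrow> real \<Rightarrow> real) \<Rightarrow> (real \<Rightarrow> real \<Rightarrow> real) \<Rightarrow> (real \<Rightarrow> real \<Rightarrow> real) \<Rightarrow> bool" where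
  "approx_solution lo hi alpha e n1 n2 D1 D2 a1 a2 lam1 lam2 chi1 chi2 T u0 v0
     u ux uxx uxxx uxxxx ut v vx vxx vxxx vxxxx vt \<longleftrightarrow>
     C41_on lo hi T u ux uxx uxxx uxxxx ut \<and> C41_on lo hi T v vx vxx vxxx vxxxx vt \<and>
     continuous_on ({lo..hi} \<times> {0..<T}) (\<lambda>(x, t). u x t) \<and>
     continuous_on ({lo..hi} \<times> {0..<T}) (\<lambda>(x, t). v x t) \<and>
     (\<forall>x\<in>{lo..hi}. \<forall>t\<in>{0..<T}. u x t > 0 \<and> v x t > 0) \<and>
     (\<forall>x\<in>{lo..hi}. u x 0 = u0 x \<and> v x 0 = v0 x) \<and>
     (\<forall>t\<in>{0<..<T}. ux lo t = 0 \<and> ux hi t = 0 \<and> vx lo t = 0 \<and> vx hi t = 0 \<and>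
        uxxx lo t = 0 \<and> uxxx hi t = 0 \<and> vxxx lo t = 0 \<and> vxxx hi t = 0) \<and>
     (\<forall>x\<in>{lo<..<hi}. \<forall>t\<in>{0<..<T}.
        ((\<lambda>y. approx_flux e alpha n1 D1 chi1 (-1) (u y t) (ux y t) (uxxx y t) (vx y t))
           has_real_derivative
           (ut x t - approx_reaction e (u x t) (lam1 - u x t + a1 * v x t))) (at x) \<and>
        ((\<lambda>y. approx_flux e alpha n2 D2 chi2 1 (v y t) (vx y t) (vxxx y t) (ux y t))
           has_real_derivative
           (vt x t - approx_reaction e (v x t) (lam2 - v x t - a2 * u x t))) (at x))"

end

theory Submission
  imports Defs
begin


lemma deriv_within_to_at:
  assumes "(f has_real_derivative d) (at x within {lo..hi})" "lo < x" "x < hi"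
  shows "(f has_real_derivative d) (at x)"
  using assms by (simp add: at_within_Icc_at)

lemma deriv_cont_on:
  assumes "\<forall>x\<in>S. (f has_real_derivative f' x) (at x within S)"
  shows "continuous_on S f"
  using assms by (meson DERIV_continuous continuous_on_eq_continuous_within)

lemma ibp:
  fixes f g f' g' :: "real \<Rightarrow> real"
  assumes "lo \<le> hi" "continuous_on {lo..hi} f" "continuous_on {lo..hi} g"
    "\<forall>x\<in>{lo<..<hi}. (f has_real_derivative f' x) (at x)"
    "\<forall>x\<in>{lo<..<hi}. (g has_real_derivative g' x) (at x)"
    "(\<lambda>x. f x * g' x) integrable_on {lo..hi}"
  shows "(\<lambda>x. f' x * g x) integrable_on {lo..hi}"
    "integral {lo..hi} (\<lambda>x. f' x * g x) = f hi * g hi - f lo * g lo - integral {lo..hi} (\<lambda>x. f x * g' x)"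
proof -
  have "((\<lambda>x. f' x * g x) has_integral (f hi * g hi - f lo * g lo - integral {lo..hi} (\<lambda>x. f x * g' x))) {lo..hi}"
    apply (rule integration_by_parts_interior[where prod="(*)" and f=f and g=g])
    using assms bounded_bilinear_mult
    by (auto simp: has_real_derivative_iff_has_vector_derivative[symmetric])
  then show "(\<lambda>x. f' x * g x) integrable_on {lo..hi}"
    "integral {lo..hi} (\<lambda>x. f' x * g x) = f hi * g hi - f lo * g lo - integral {lo..hi} (\<lambda>x. f x * g' x)"
    by (auto simp: integrable_on_def integral_unique)
qed

lemma uc_slice:
  fixes f :: "real \<Rightarrow> real \<Rightarrow> real"
  assumes "compact S" "compact K" "continuous_on (S \<times> K) (\<lambda>(x, s). f x s)" "\<epsilon> > 0"
  shows "\<exists>\<delta>>0. \<forall>x\<in>S. \<forall>s\<in>K. \<forall>s'\<in>K. \<bar>s - s'\<bar> < \<delta> \<longrightarrow> \<bar>f x s - f x s'\<bar> < \<epsilon>"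
proof -
  have "uniformly_continuous_on (S \<times> K) (\<lambda>(x, s). f x s)"
    using assms by (intro compact_uniformly_continuous compact_Times) auto
  then obtain d where d: "d > 0" "\<forall>p\<in>S \<times> K. \<forall>p'\<in>S \<times> K. dist p' p < d \<longrightarrow>
      dist ((\<lambda>(x, s). f x s) p') ((\<lambda>(x, s). f x s) p) < \<epsilon>"
    unfolding uniformly_continuous_on_def using assms(4) by metis
  show ?thesis
  proof (intro exI[of _ d] conjI ballI impI)
    fix x s s' assume "x \<in> S" "s \<in> K" "s' \<in> K" "\<bar>s - s'\<bar> < d"
    then show "\<bar>f x s - f x s'\<bar> < \<epsilon>"
      using d(2)[rule_format, of "(x, s')" "(x, s)"] by (auto simp: dist_Pair_Pair dist_real_def)
  qed (use d in auto)
qed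

lemma bound_slice:
  fixes f :: "real \<Rightarrow> real \<Rightarrow> real"
  assumes "compact S" "compact K" "continuous_on (S \<times> K) (\<lambda>(x, s). f x s)"
  shows "\<exists>M>0. \<forall>x\<in>S. \<forall>s\<in>K. \<bar>f x s\<bar> \<le> M"
proof -
  have "compact ((\<lambda>(x, s). f x s) ` (S \<times> K))"
    using assms by (intro compact_continuous_image compact_Times) auto
  then obtain b where "b > 0" "\<forall>y\<in>(\<lambda>(x, s). f x s) ` (S \<times> K). norm y \<le> b"
    using compact_imp_bounded bounded_pos by metis
  then show ?thesis by (intro exI[of _ b]) force
qed



lemma slice_cont:
  fixes f :: "real \<Rightarrow> real \<Rightarrow> real"
  assumes "continuous_on (S \<times> K) (\<lambda>(x, s). f x s)" "s \<in> K"
  shows "continuous_on S (\<lambda>x. f x s)"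
proof -
  have "continuous_on S (\<lambda>x. (\<lambda>(x, s). f x s) (x, s))"
    by (rule continuous_on_compose2[OF assms(1)]) (use assms(2) in \<open>auto intro!: continuous_intros\<close>)
  then show ?thesis by simp
qed

lemma time_deriv:
  fixes u ux uxx ut :: "real \<Rightarrow> real \<Rightarrow> real"
  assumes lohi: "lo < hi" and t: "0 < t" "t < T"
   and dx: "\<forall>s\<in>{0<..<T}. \<forall>x\<in>{lo..hi}. ((\<lambda>y. u y s) has_real_derivative ux x s) (at x within {lo..hi}) \<and>
        ((\<lambda>y. ux y s) has_real_derivative uxx x s) (at x within {lo..hi})"
   and dt: "\<forall>s\<in>{0<..<T}. \<forall>x\<in>{lo..hi}. ((\<lambda>s. u x s) has_real_derivative ut x s) (at s)"
   and bc: "\<forall>s\<in>{0<..<T}. ux lo s = 0 \<and> ux hi s = 0"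
   and c1: "continuous_on ({lo..hi} \<times> {0<..<T}) (\<lambda>(x, s). uxx x s)"
   and c2: "continuous_on ({lo..hi} \<times> {0<..<T}) (\<lambda>(x, s). ut x s)"
  shows "((\<lambda>s. integral {lo..hi} (\<lambda>x. (ux x s)\<^sup>2)) has_real_derivative
           (-2 * integral {lo..hi} (\<lambda>x. ut x t * uxx x t))) (at t)"
proof -
  define S where "S = {lo..hi}"
  define F where "F = (\<lambda>s. integral S (\<lambda>x. (ux x s)\<^sup>2))"
  have cu: "continuous_on S (\<lambda>x. u x s)" if "s \<in> {0<..<T}" for s
    using dx that unfolding S_def by (intro deriv_cont_on) auto
  have cux: "continuous_on S (\<lambda>x. ux x s)" if "s \<in> {0<..<T}" for s
    using dx that unfolding S_def by (intro deriv_cont_on) auto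
  have cuxx: "continuous_on S (\<lambda>x. uxx x s)" if "s \<in> {0<..<T}" for s
    using slice_cont[OF c1 that] unfolding S_def .
  have cut: "continuous_on S (\<lambda>x. ut x s)" if "s \<in> {0<..<T}" for s
    using slice_cont[OF c2 that] unfolding S_def .
  have intg: "(\<lambda>x. f x * g x) integrable_on S" if "continuous_on S f" "continuous_on S g" for f g :: "real \<Rightarrow> real"
    unfolding S_def by (rule integrable_continuous_interval) (use that S_def in \<open>auto intro!: continuous_intros\<close>)
  have pairing: "integral S (\<lambda>x. uxx x b * u x a) = - integral S (\<lambda>x. ux x b * ux x a)"
    if ab: "a \<in> {0<..<T}" "b \<in> {0<..<T}" for a b
  proof -
    have "integral {lo..hi} (\<lambda>x. uxx x b * u x a) = ux hi b * u hi a - ux lo b * u lo a - integral {lo..hi} (\<lambda>x. ux x b * ux x a)"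
    proof (rule ibp(2))
      show "\<forall>x\<in>{lo<..<hi}. ((\<lambda>x. ux x b) has_real_derivative uxx x b) (at x)"
        "\<forall>x\<in>{lo<..<hi}. ((\<lambda>x. u x a) has_real_derivative ux x a) (at x)"
        using dx ab by (auto simp: at_within_Icc_at[symmetric])
    qed (use lohi cux[OF ab(2)] cu[OF ab(1)] intg[OF cux[OF ab(2)] cux[OF ab(1)]] in \<open>auto simp: S_def\<close>)
    then show ?thesis using bc ab by (simp add: S_def)
  qed
  have diff: "F s - F t = - integral S (\<lambda>x. (u x s - u x t) * (uxx x s + uxx x t))"
    if s: "s \<in> {0<..<T}" for s
  proof -
    have ts: "t \<in> {0<..<T}" using t by auto
    have e1: "(\<lambda>x. (u x s - u x t) * (uxx x s + uxx x t)) =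
       (\<lambda>x. ((uxx x s * u x s + uxx x t * u x s) - uxx x s * u x t) - uxx x t * u x t)"
      by (auto simp: algebra_simps)
    have "integral S (\<lambda>x. (u x s - u x t) * (uxx x s + uxx x t)) =
       integral S (\<lambda>x. uxx x s * u x s) + integral S (\<lambda>x. uxx x t * u x s)
       - integral S (\<lambda>x. uxx x s * u x t) - integral S (\<lambda>x. uxx x t * u x t)"
      unfolding e1
      using intg[OF cuxx[OF s] cu[OF s]] intg[OF cuxx[OF ts] cu[OF s]] intg[OF cuxx[OF s] cu[OF ts]]
        intg[OF cuxx[OF ts] cu[OF ts]]
      by (simp add: integral_add integral_diff integrable_add integrable_diff)
    also have "\<dots> = - integral S (\<lambda>x. ux x s * ux x s) - integral S (\<lambda>x. ux x t * ux x s)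
        + integral S (\<lambda>x. ux x s * ux x t) + integral S (\<lambda>x. ux x t * ux x t)"
      using pairing s ts by simp
    also have "integral S (\<lambda>x. ux x t * ux x s) = integral S (\<lambda>x. ux x s * ux x t)"
      by (simp add: mult.commute)
    finally show ?thesis unfolding F_def by (simp add: power2_eq_square)
  qed
  define D where "D = -2 * integral S (\<lambda>x. ut x t * uxx x t)"
  have "((\<lambda>y. (F y - F t) / (y - t)) \<longlongrightarrow> D) (at t)"
    unfolding LIM_eq
  proof (intro allI impI)
    fix \<epsilon> :: real assume \<epsilon>: "\<epsilon> > 0"
    define d0 where "d0 = min t (T - t) / 2"
    have d0: "d0 > 0" using t by (simp add: d0_def)
    define K where "K = {t - d0..t + d0}"
    have "d0 \<le> t / 2" "d0 \<le> (T - t) / 2" by (auto simp: d0_def)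
    then have KT: "K \<subseteq> {0<..<T}" using t by (auto simp: K_def)
    have tK: "t \<in> K" using d0 by (simp add: K_def)
    have cS: "compact S" "compact K" by (auto simp: S_def K_def)
    have c1K: "continuous_on (S \<times> K) (\<lambda>(x, s). uxx x s)"
      by (rule continuous_on_subset[OF c1]) (use KT in \<open>auto simp: S_def\<close>)
    have c2K: "continuous_on (S \<times> K) (\<lambda>(x, s). ut x s)"
      by (rule continuous_on_subset[OF c2]) (use KT in \<open>auto simp: S_def\<close>)
    obtain M1 where M1: "M1 > 0" "\<forall>x\<in>S. \<forall>s\<in>K. \<bar>uxx x s\<bar> \<le> M1"
      using bound_slice[OF cS c1K] by blast
    obtain M2 where M2: "M2 > 0" "\<forall>x\<in>S. \<forall>s\<in>K. \<bar>ut x s\<bar> \<le> M2"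
      using bound_slice[OF cS c2K] by blast
    define M where "M = M1 + M2"
    have M: "M > 0" "\<forall>x\<in>S. \<forall>s\<in>K. \<bar>uxx x s\<bar> \<le> M" "\<forall>x\<in>S. \<forall>s\<in>K. \<bar>ut x s\<bar> \<le> M"
      using M1 M2 by (auto simp: M_def) (smt (verit))+
    define \<eta> where "\<eta> = \<epsilon> / (4 * M * (hi - lo))"
    have \<eta>: "\<eta> > 0" using \<epsilon> M lohi by (simp add: \<eta>_def)
    obtain \<delta>1 where \<delta>1: "\<delta>1 > 0" "\<forall>x\<in>S. \<forall>s\<in>K. \<forall>s'\<in>K. \<bar>s - s'\<bar> < \<delta>1 \<longrightarrow> \<bar>uxx x s - uxx x s'\<bar> < \<eta>"
      using uc_slice[OF cS c1K \<eta>] by blast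
    obtain \<delta>2 where \<delta>2: "\<delta>2 > 0" "\<forall>x\<in>S. \<forall>s\<in>K. \<forall>s'\<in>K. \<bar>s - s'\<bar> < \<delta>2 \<longrightarrow> \<bar>ut x s - ut x s'\<bar> < \<eta>"
      using uc_slice[OF cS c2K \<eta>] by blast
    define \<delta> where "\<delta> = min d0 (min \<delta>1 \<delta>2)"
    show "\<exists>\<delta>>0. \<forall>s. s \<noteq> t \<and> norm (s - t) < \<delta> \<longrightarrow> norm ((F s - F t) / (s - t) - D) < \<epsilon>"
    proof (intro exI[of _ \<delta>] conjI allI impI)
      show "\<delta> > 0" using d0 \<delta>1 \<delta>2 by (simp add: \<delta>_def)
      fix s assume s: "s \<noteq> t \<and> norm (s - t) < \<delta>"
      have sK: "s \<in> K" using s by (auto simp: K_def \<delta>_def)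
      have sT: "s \<in> {0<..<T}" using sK KT by auto
      have tT: "t \<in> {0<..<T}" using t by auto
      define g where "g = (\<lambda>x. (u x s - u x t) / (s - t) * (uxx x s + uxx x t) - 2 * (ut x t * uxx x t))"
      have gb: "\<bar>g x\<bar> \<le> 3 * M * \<eta>" if x: "x \<in> S" for x
      proof -
        have "\<exists>\<xi>\<in>K. \<bar>\<xi> - t\<bar> < \<delta> \<and> u x s - u x t = (s - t) * ut x \<xi>"
        proof (cases "s < t")
          case True
          have "\<exists>z. s < z \<and> z < t \<and> u x t - u x s = (t - s) * ut x z"
            apply (rule MVT2[OF True])
            subgoal for z
            proof -
              assume "s \<le> z" "z \<le> t"
              then have "z \<in> K" using sK tK by (auto simp: K_def)
              then have "z \<in> {0<..<T}" using KT by auto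
              then show ?thesis using dt x by (auto simp: S_def)
            qed
            done
          then obtain z where "s < z" "z < t" "u x t - u x s = (t - s) * ut x z" by blast
          then show ?thesis using s sK tK
            by (intro bexI[of _ z]) (auto simp: K_def algebra_simps)
        next
          case False
          then have st: "t < s" using s by auto
          have "\<exists>z. t < z \<and> z < s \<and> u x s - u x t = (s - t) * ut x z"
            apply (rule MVT2[OF st])
            subgoal for z
            proof -
              assume "t \<le> z" "z \<le> s"
              then have "z \<in> K" using sK tK by (auto simp: K_def)
              then have "z \<in> {0<..<T}" using KT by auto
              then show ?thesis using dt x by (auto simp: S_def)
            qed
            done
          then obtain z where "t < z" "z < s" "u x s - u x t = (s - t) * ut x z" by blast
          then show ?thesis using s sK tK
            by (intro bexI[of _ z]) (auto simp: K_def algebra_simps)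
        qed
        then obtain \<xi> where \<xi>: "\<xi> \<in> K" "\<bar>\<xi> - t\<bar> < \<delta>" "u x s - u x t = (s - t) * ut x \<xi>" by blast
        have q: "(u x s - u x t) / (s - t) = ut x \<xi>" using \<xi>(3) s by auto
        have h1: "\<bar>ut x \<xi> - ut x t\<bar> < \<eta>" using \<delta>2(2) x \<xi> tK by (auto simp: \<delta>_def)
        have h2: "\<bar>uxx x s - uxx x t\<bar> < \<eta>" using \<delta>1(2) x sK tK s by (auto simp: \<delta>_def)
        have h3: "\<bar>uxx x s + uxx x t\<bar> \<le> 2 * M"
        proof -
          have "\<bar>uxx x s\<bar> \<le> M" "\<bar>uxx x t\<bar> \<le> M" using M x sK tK by auto
          then show ?thesis by linarith
        qed
        have h4: "\<bar>ut x t\<bar> \<le> M" using M x tK by fastforce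
        have "g x = (ut x \<xi> - ut x t) * (uxx x s + uxx x t) + ut x t * (uxx x s - uxx x t)"
          unfolding g_def q by (simp add: algebra_simps)
        also have "\<bar>\<dots>\<bar> \<le> \<bar>ut x \<xi> - ut x t\<bar> * \<bar>uxx x s + uxx x t\<bar> + \<bar>ut x t\<bar> * \<bar>uxx x s - uxx x t\<bar>"
          by (metis abs_mult abs_triangle_ineq)
        also have "\<dots> \<le> \<eta> * (2 * M) + M * \<eta>"
          by (intro add_mono mult_mono) (use h1 h2 h3 h4 \<eta> M in auto)
        finally show ?thesis by (simp add: algebra_simps)
      qed
      have gc: "continuous_on S g"
        unfolding g_def using cu[OF sT] cu[OF tT] cuxx[OF sT] cuxx[OF tT] cut[OF tT] s
        by (auto intro!: continuous_intros)
      have "\<bar>integral S g\<bar> \<le> 3 * M * \<eta> * (hi - lo)"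
        using integral_bound[of lo hi g "3 * M * \<eta>"] gb gc lohi by (auto simp: S_def)
      also have "\<dots> = 3 / 4 * \<epsilon>" using M lohi by (simp add: \<eta>_def field_simps)
      also have "\<dots> < \<epsilon>" using \<epsilon> by simp
      finally have gi: "\<bar>integral S g\<bar> < \<epsilon>" .
      have "(F s - F t) / (s - t) - D = - integral S g"
      proof -
        have i1: "(\<lambda>x. (u x s - u x t) / (s - t) * (uxx x s + uxx x t)) integrable_on S"
          using cu[OF sT] cu[OF tT] cuxx[OF sT] cuxx[OF tT] s unfolding S_def
          by (intro integrable_continuous_interval) (auto intro!: continuous_intros simp: S_def)
        have i2: "(\<lambda>x. 2 * (ut x t * uxx x t)) integrable_on S"
          using cut[OF tT] cuxx[OF tT] unfolding S_def
          by (intro integrable_continuous_interval) (auto intro!: continuous_intros simp: S_def)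
        have "integral S g = integral S (\<lambda>x. (u x s - u x t) / (s - t) * (uxx x s + uxx x t))
             - integral S (\<lambda>x. 2 * (ut x t * uxx x t))"
          unfolding g_def using i1 i2 by (rule integral_diff)
        also have "integral S (\<lambda>x. (u x s - u x t) / (s - t) * (uxx x s + uxx x t)) =
            integral S (\<lambda>x. (u x s - u x t) * (uxx x s + uxx x t)) / (s - t)"
        proof -
          have "(\<lambda>x. (u x s - u x t) / (s - t) * (uxx x s + uxx x t)) =
                (\<lambda>x. (u x s - u x t) * (uxx x s + uxx x t) / (s - t))"
            by (rule ext) simp
          then show ?thesis by (simp only: integral_divide)
        qed
        finally have E1: "integral S g = integral S (\<lambda>x. (u x s - u x t) * (uxx x s + uxx x t)) / (s - t)
             - 2 * integral S (\<lambda>x. ut x t * uxx x t)" by (simp only: integral_mult_right)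
        have alg: "\<And>Q I G a :: real. G = Q / a - 2 * I \<Longrightarrow> (- Q) / a - (-2 * I) = - G"
          by simp
        show ?thesis using alg[OF E1] by (simp only: diff[OF sT] D_def)
      qed
      then show "norm ((F s - F t) / (s - t) - D) < \<epsilon>" using gi by simp
    qed
  qed
  then show ?thesis unfolding has_field_derivative_iff F_def D_def S_def .
qed



lemma cint: "continuous_on {lo..hi} f \<Longrightarrow> (f::real\<Rightarrow>real) integrable_on {lo..hi}"
  by (rule integrable_continuous_interval)

lemma powr_m1: "(w::real) > 0 \<Longrightarrow> w powr (a - 1) = w powr a / w"
  by (simp add: powr_diff)

lemma lin2:
  fixes f g :: "real \<Rightarrow> real"
  assumes "f integrable_on S" "g integrable_on S"
  shows "integral S (\<lambda>x. a * f x + b * g x) = a * integral S f + b * integral S g"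
  using integral_add[OF integrable_on_mult_right[OF assms(1)] integrable_on_mult_right[OF assms(2)]] by simp

lemma lin3:
  fixes f g h :: "real \<Rightarrow> real"
  assumes "f integrable_on S" "g integrable_on S" "h integrable_on S"
  shows "integral S (\<lambda>x. a * f x + b * g x + c * h x) = a * integral S f + b * integral S g + c * integral S h"
  using integral_add[OF integrable_add[OF integrable_on_mult_right[OF assms(1)] integrable_on_mult_right[OF assms(2)]] integrable_on_mult_right[OF assms(3)]]
    lin2[OF assms(1,2)] by simp

lemma lin4:
  fixes f g h k :: "real \<Rightarrow> real"
  assumes "f integrable_on S" "g integrable_on S" "h integrable_on S" "k integrable_on S"
  shows "integral S (\<lambda>x. a * f x + b * g x + c * h x + d * k x)
     = a * integral S f + b * integral S g + c * integral S h + d * integral S k"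
  using integral_add[OF integrable_add[OF integrable_add[OF integrable_on_mult_right[OF assms(1)] integrable_on_mult_right[OF assms(2)]] integrable_on_mult_right[OF assms(3)]] integrable_on_mult_right[OF assms(4)]]
    lin3[OF assms(1,2,3)] by simp

lemma spatial:
  fixes w wx wxx wxxx zx zxx c r wt :: "real \<Rightarrow> real" and lo hi e alpha n D chi sg lam :: real
  assumes lohi: "lo < hi" and Dp: "D > 0" and al: "0 < alpha" "alpha \<le> 1/2" and ep: "e > 0" and lam: "lam > 0"
   and d1: "\<forall>x\<in>{lo..hi}. (w has_real_derivative wx x) (at x within {lo..hi})"
   and d2: "\<forall>x\<in>{lo..hi}. (wx has_real_derivative wxx x) (at x within {lo..hi})"
   and d3: "\<forall>x\<in>{lo..hi}. (wxx has_real_derivative wxxx x) (at x within {lo..hi})"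
   and c3: "continuous_on {lo..hi} wxxx"
   and dz: "\<forall>x\<in>{lo..hi}. (zx has_real_derivative zxx x) (at x within {lo..hi})"
   and cc: "continuous_on {lo..hi} c"
   and pos: "\<forall>x\<in>{lo..hi}. w x > 0"
   and bc: "wx lo = 0" "wx hi = 0" "wxxx lo = 0" "wxxx hi = 0" "zx lo = 0" "zx hi = 0"
   and rdef: "\<forall>x\<in>{lo..hi}. r x = lam - w x + c x"
   and eq: "\<forall>x\<in>{lo<..<hi}. ((\<lambda>y. approx_flux e alpha n D chi sg (w y) (wx y) (wxxx y) (zx y))
              has_real_derivative (wt x - approx_reaction e (w x) (r x))) (at x)"
  shows "- integral {lo..hi} (\<lambda>x. wt x * wxx x)
     + e * integral {lo..hi} (\<lambda>x. w x ^ 4 / (w x powr (4 - n) + e) * (wxxx x)\<^sup>2)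
     + D / 2 * integral {lo..hi} (\<lambda>x. (wxx x)\<^sup>2)
     \<le> - sg * chi * integral {lo..hi} (\<lambda>x. deriv (\<lambda>y. w y powr (5 - n) / (w y powr (4 - n) + e) * zx y) x * wxx x)
       + 3 * lam * integral {lo..hi} (\<lambda>x. (wx x)\<^sup>2)
       + 1 / (2 * D) * integral {lo..hi} (\<lambda>x. (w x)\<^sup>2 * (c x)\<^sup>2)"
proof -
  define S where "S = {lo..hi}"
  have lohi': "lo \<le> hi" using lohi by simp
  have cw: "continuous_on S w" using d1 unfolding S_def by (rule deriv_cont_on)
  have cwx: "continuous_on S wx" using d2 unfolding S_def by (rule deriv_cont_on)
  have cwxx: "continuous_on S wxx" using d3 unfolding S_def by (rule deriv_cont_on)
  have cwxxx: "continuous_on S wxxx" using c3 unfolding S_def .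
  have czx: "continuous_on S zx" using dz unfolding S_def by (rule deriv_cont_on)
  have cc': "continuous_on S c" using cc unfolding S_def .
  have pos': "\<forall>x\<in>S. w x \<noteq> 0" using pos unfolding S_def by auto
  have den1: "\<And>y::real. y powr (4 - n) + e \<noteq> 0" using ep by (metis add_nonneg_pos powr_ge_zero less_irrefl)
  have den2: "\<And>y::real. 3 * y\<^sup>2 + e \<noteq> 0" using ep by (metis add_nonneg_pos zero_le_power2 mult_nonneg_nonneg zero_le_numeral less_irrefl)
  have i1: "(w has_real_derivative wx x) (at x)" if "x \<in> {lo<..<hi}" for x
    using d1 that by (intro deriv_within_to_at[where lo=lo and hi=hi]) auto
  have i2: "(wx has_real_derivative wxx x) (at x)" if "x \<in> {lo<..<hi}" for x
    using d2 that by (intro deriv_within_to_at[where lo=lo and hi=hi]) auto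
  have i3: "(wxx has_real_derivative wxxx x) (at x)" if "x \<in> {lo<..<hi}" for x
    using d3 that by (intro deriv_within_to_at[where lo=lo and hi=hi]) auto
  have iz: "(zx has_real_derivative zxx x) (at x)" if "x \<in> {lo<..<hi}" for x
    using dz that by (intro deriv_within_to_at[where lo=lo and hi=hi]) auto
  have wpos: "w x > 0" if "x \<in> {lo<..<hi}" for x using pos that by auto
  define P where "P = (\<lambda>x. w x powr (-alpha))"
  define A where "A = (\<lambda>x. w x ^ 4 / (w x powr (4 - n) + e))"
  define B where "B = (\<lambda>x. w x powr (5 - n) / (w x powr (4 - n) + e))"
  define G where "G = (\<lambda>x. 3 * w x ^ 3 / (3 * (w x)\<^sup>2 + e))"
  define F where "F = (\<lambda>x. approx_flux e alpha n D chi sg (w x) (wx x) (wxxx x) (zx x))"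
  define R where "R = (\<lambda>x. approx_reaction e (w x) (r x))"
  have Fe: "F = (\<lambda>x. - e * (A x * wxxx x) + e powr (alpha / 2) * (P x * wx x) + D * wx x + sg * chi * (B x * zx x))"
    by (rule ext) (simp add: F_def approx_flux_def A_def P_def B_def powr_minus)
  have cP: "continuous_on S P" unfolding P_def using cw pos' by (auto intro!: continuous_intros)
  have cA: "continuous_on S A" unfolding A_def using cw pos' den1 by (auto intro!: continuous_intros)
  have cB: "continuous_on S B" unfolding B_def using cw pos' den1 by (auto intro!: continuous_intros)
  have cG: "continuous_on S G" unfolding G_def using cw den2 by (auto intro!: continuous_intros)
  have cF: "continuous_on S F" unfolding Fe using cP cA cB cwx cwxxx czx by (auto intro!: continuous_intros)
  note cs = cw cwx cwxx cwxxx czx cc' cP cA cB cG cF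
  have Flo: "F lo = 0" "F hi = 0" unfolding Fe using bc by auto
  have E1a: "(\<lambda>x. (wt x - R x) * wxx x) integrable_on S"
    "integral S (\<lambda>x. (wt x - R x) * wxx x) = F hi * wxx hi - F lo * wxx lo - integral S (\<lambda>x. F x * wxxx x)"
    unfolding S_def
    by (rule ibp[where f=F and g=wxx and f'="\<lambda>x. wt x - R x" and g'=wxxx];
        use lohi' cs eq i3 in \<open>auto simp: S_def F_def R_def intro!: cint continuous_intros\<close>)+
  have E1: "integral S (\<lambda>x. (wt x - R x) * wxx x) = - integral S (\<lambda>x. F x * wxxx x)"
    using E1a Flo by simp
  have cintS: "\<And>f :: real \<Rightarrow> real. continuous_on S f \<Longrightarrow> f integrable_on S" unfolding S_def using cint by blast
  have Rr: "\<forall>x\<in>S. R x = G x * (lam - w x + c x)"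
    using rdef by (auto simp: S_def R_def G_def approx_reaction_def)
  have E2: "integral S (\<lambda>x. wt x * wxx x) = integral S (\<lambda>x. (wt x - R x) * wxx x)
      + integral S (\<lambda>x. G x * (lam - w x + c x) * wxx x)"
  proof -
    have "integral S (\<lambda>x. wt x * wxx x) = integral S (\<lambda>x. (wt x - R x) * wxx x + G x * (lam - w x + c x) * wxx x)"
      proof (rule integral_cong)
      fix x assume "x \<in> S"
      then have Rx: "R x = G x * (lam - w x + c x)" using Rr by auto
      show "wt x * wxx x = (wt x - R x) * wxx x + G x * (lam - w x + c x) * wxx x"
        unfolding Rx by (simp add: algebra_simps)
    qed
    also have "\<dots> = integral S (\<lambda>x. (wt x - R x) * wxx x) + integral S (\<lambda>x. G x * (lam - w x + c x) * wxx x)"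
      by (rule integral_add[OF E1a(1)]) (use cs in \<open>auto intro!: cintS continuous_intros\<close>)
    finally show ?thesis .
  qed
  have E3: "integral S (\<lambda>x. F x * wxxx x) = (- e) * integral S (\<lambda>x. A x * (wxxx x * wxxx x))
      + e powr (alpha / 2) * integral S (\<lambda>x. wxxx x * (P x * wx x))
      + D * integral S (\<lambda>x. wxxx x * wx x) + (sg * chi) * integral S (\<lambda>x. wxxx x * (B x * zx x))"
  proof -
    have "integral S (\<lambda>x. F x * wxxx x) = integral S (\<lambda>x. (- e) * (A x * (wxxx x * wxxx x))
      + e powr (alpha / 2) * (wxxx x * (P x * wx x))
      + D * (wxxx x * wx x) + (sg * chi) * (wxxx x * (B x * zx x)))"
      by (rule integral_cong) (simp add: Fe algebra_simps)
    also have "\<dots> = (- e) * integral S (\<lambda>x. A x * (wxxx x * wxxx x))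
      + e powr (alpha / 2) * integral S (\<lambda>x. wxxx x * (P x * wx x))
      + D * integral S (\<lambda>x. wxxx x * wx x) + (sg * chi) * integral S (\<lambda>x. wxxx x * (B x * zx x))"
      by (rule lin4) (use cs in \<open>auto intro!: cintS continuous_intros\<close>)
    finally show ?thesis .
  qed
  have E4a: "integral S (\<lambda>x. wxxx x * wx x) = wxx hi * wx hi - wxx lo * wx lo - integral S (\<lambda>x. wxx x * wxx x)"
    unfolding S_def
    by (rule ibp(2)[where f=wxx and g=wx and f'=wxxx and g'=wxx];
        use lohi' cs i2 i3 in \<open>auto simp: S_def intro!: cint continuous_intros\<close>)
  have E4: "integral S (\<lambda>x. wxxx x * wx x) = - integral S (\<lambda>x. wxx x * wxx x)"
    using E4a bc by simp
  have dP: "(P has_real_derivative (-alpha * (P x / w x) * wx x)) (at x)" if "x \<in> {lo<..<hi}" for x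
  proof -
    have "((\<lambda>y. w y powr (-alpha)) has_real_derivative (-alpha) * w x powr (-alpha - of_nat 1) * wx x) (at x)"
      by (rule DERIV_fun_powr[OF i1[OF that] wpos[OF that]])
    moreover have "w x powr (-alpha - of_nat 1) = P x / w x"
      using powr_m1[OF wpos[OF that], of "-alpha"] by (simp add: P_def)
    ultimately show ?thesis unfolding P_def by simp
  qed
  have dPwx: "((\<lambda>y. P y * wx y) has_real_derivative (-alpha * (P x / w x) * wx x) * wx x + wxx x * P x) (at x)"
    if "x \<in> {lo<..<hi}" for x
    by (rule DERIV_mult[OF dP[OF that] i2[OF that]])
  have E5a: "integral S (\<lambda>x. wxxx x * (P x * wx x)) = wxx hi * (P hi * wx hi) - wxx lo * (P lo * wx lo)
       - integral S (\<lambda>x. wxx x * ((-alpha * (P x / w x) * wx x) * wx x + wxx x * P x))"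
    unfolding S_def
    by (rule ibp(2)[where f=wxx and g="\<lambda>x. P x * wx x" and f'=wxxx
          and g'="\<lambda>x. (-alpha * (P x / w x) * wx x) * wx x + wxx x * P x"];
        use lohi' cs i3 dPwx pos' in \<open>auto simp: S_def intro!: cint continuous_intros\<close>)
  define Kf where "Kf = (\<lambda>x. P x / w x * wx x * wx x * wxx x)"
  define Jf where "Jf = (\<lambda>x. P x * wxx x * wxx x)"
  define If where "If = (\<lambda>x. P x / (w x * w x) * (wx x * wx x * wx x * wx x))"
  have cK: "continuous_on S Kf" unfolding Kf_def using cs pos' by (auto intro!: continuous_intros)
  have cJ: "continuous_on S Jf" unfolding Jf_def using cs pos' by (auto intro!: continuous_intros)
  have cI: "continuous_on S If" unfolding If_def using cs pos' by (auto intro!: continuous_intros)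
  have E5: "integral S (\<lambda>x. wxxx x * (P x * wx x)) = alpha * integral S Kf - integral S Jf"
  proof -
    have "(\<lambda>x. wxx x * ((-alpha * (P x / w x) * wx x) * wx x + wxx x * P x)) = (\<lambda>x. (-alpha) * Kf x + 1 * Jf x)"
      by (rule ext) (simp add: Kf_def Jf_def algebra_simps)
    then have "integral S (\<lambda>x. wxx x * ((-alpha * (P x / w x) * wx x) * wx x + wxx x * P x))
        = (-alpha) * integral S Kf + 1 * integral S Jf"
      by (simp only: lin2[OF cintS[OF cK] cintS[OF cJ]])
    then show ?thesis using E5a bc by simp
  qed
  have dQ: "((\<lambda>y. P y / w y) has_real_derivative (-(alpha + 1)) * (P x / (w x * w x)) * wx x) (at x)"
    if "x \<in> {lo<..<hi}" for x
  proof (rule DERIV_cong[OF DERIV_divide[OF dP[OF that] i1[OF that]]])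
    show "(- alpha * (P x / w x) * wx x * w x - P x * wx x) / (w x * w x) = - (alpha + 1) * (P x / (w x * w x)) * wx x"
      using wpos[OF that] by (simp add: field_simps)
  qed (use wpos[OF that] in auto)
  have dW3: "((\<lambda>y. wx y ^ 3) has_real_derivative 3 * (wx x * wx x) * wxx x) (at x)"
    if "x \<in> {lo<..<hi}" for x
    using i2[OF that] by (auto intro!: derivative_eq_intros simp: power2_eq_square)
  have E6a: "integral S (\<lambda>x. ((-(alpha + 1)) * (P x / (w x * w x)) * wx x) * wx x ^ 3)
      = P hi / w hi * wx hi ^ 3 - P lo / w lo * wx lo ^ 3 - integral S (\<lambda>x. P x / w x * (3 * (wx x * wx x) * wxx x))"
    unfolding S_def
    by (rule ibp(2)[where f="\<lambda>x. P x / w x" and g="\<lambda>x. wx x ^ 3" and f'="\<lambda>x. (-(alpha + 1)) * (P x / (w x * w x)) * wx x"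
          and g'="\<lambda>x. 3 * (wx x * wx x) * wxx x"];
        use lohi' cs dQ dW3 pos' in \<open>auto simp: S_def intro!: cint continuous_intros\<close>)
  have E6: "(alpha + 1) * integral S If = 3 * integral S Kf"
  proof -
    have "(\<lambda>x. ((-(alpha + 1)) * (P x / (w x * w x)) * wx x) * wx x ^ 3) = (\<lambda>x. (-(alpha + 1)) * If x)"
      by (rule ext) (simp add: If_def power3_eq_cube algebra_simps)
    moreover have "(\<lambda>x. P x / w x * (3 * (wx x * wx x) * wxx x)) = (\<lambda>x. 3 * Kf x)"
      by (rule ext) (simp add: Kf_def algebra_simps)
    ultimately have "(-(alpha + 1)) * integral S If = - (3 * integral S Kf)" using E6a bc by simp
    then show ?thesis by (simp add: algebra_simps)
  qed
  define \<delta> where "\<delta> = (alpha + 1) / 3"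
  have \<delta>: "\<delta> > 0" using al by (simp add: \<delta>_def)
  have Pnn: "P x \<ge> 0" for x by (simp add: P_def)
  have E7a: "integral S Kf \<le> integral S (\<lambda>x. (\<delta> / 2) * If x + (1 / (2 * \<delta>)) * Jf x)"
  proof (rule integral_le)
    show "Kf integrable_on S" using cK by (rule cintS)
    show "(\<lambda>x. (\<delta> / 2) * If x + (1 / (2 * \<delta>)) * Jf x) integrable_on S"
      using cI cJ \<delta> by (auto intro!: cintS continuous_intros)
    fix x assume x: "x \<in> S"
    have wx0: "w x > 0" using pos x by (auto simp: S_def)
    define q where "q = wx x * wx x / w x"
    define Y where "Y = wxx x"
    have id: "\<delta> / 2 * (q * q) + Y * Y / (2 * \<delta>) - q * Y = (\<delta> * q - Y)\<^sup>2 / (2 * \<delta>)"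
      using \<delta> by (simp add: field_simps power2_eq_square)
    have "0 \<le> (\<delta> * q - Y)\<^sup>2 / (2 * \<delta>)" using \<delta> by simp
    then have "0 \<le> P x * (\<delta> / 2 * (q * q) + Y * Y / (2 * \<delta>) - q * Y)"
      unfolding id by (rule mult_nonneg_nonneg[OF Pnn[of x]])
    moreover have "Kf x = P x * (q * Y)" "If x = P x * (q * q)" "Jf x = P x * (Y * Y)"
      using wx0 by (simp_all add: Kf_def If_def Jf_def q_def Y_def field_simps)
    ultimately show "Kf x \<le> (\<delta> / 2) * If x + (1 / (2 * \<delta>)) * Jf x"
      by (simp add: algebra_simps)
  qed
  have E7b: "integral S (\<lambda>x. (\<delta> / 2) * If x + (1 / (2 * \<delta>)) * Jf x) = (\<delta> / 2) * integral S If + (1 / (2 * \<delta>)) * integral S Jf"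
    by (rule lin2[OF cintS[OF cI] cintS[OF cJ]])
  have Jnn: "0 \<le> integral S Jf"
    by (rule integral_nonneg[OF cintS[OF cJ]]) (simp add: Jf_def Pnn mult.assoc)
  have X2: "alpha * integral S Kf - integral S Jf \<le> 0"
  proof -
    define k where "k = integral S Kf"
    define j where "j = integral S Jf"
    define i where "i = integral S If"
    have h1: "(alpha + 1) * i = 3 * k" using E6 by (simp add: i_def k_def)
    have h2: "k \<le> (\<delta> / 2) * i + (1 / (2 * \<delta>)) * j" using E7a E7b by (simp add: i_def k_def j_def)
    have "(\<delta> / 2) * i = k / 2" using h1 by (simp add: \<delta>_def field_simps)
    moreover have "(1 / (2 * \<delta>)) * j = 3 * j / (2 * (alpha + 1))" using al by (simp add: \<delta>_def field_simps)
    ultimately have "k \<le> k / 2 + 3 * j / (2 * (alpha + 1))" using h2 by simp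
    then have "2 * (alpha + 1) * k \<le> 2 * (alpha + 1) * (k / 2 + 3 * j / (2 * (alpha + 1)))"
      using al by (intro mult_left_mono) auto
    also have "\<dots> = (alpha + 1) * k + 3 * j" using al by (simp add: field_simps)
    finally have h3: "(alpha + 1) * k \<le> 3 * j" by (simp add: algebra_simps)
    have "j \<ge> 0" using Jnn by (simp add: j_def)
    have "alpha * k \<le> j"
    proof (cases "k \<le> 0")
      case True then show ?thesis using al \<open>j \<ge> 0\<close> by (metis mult_nonneg_nonpos order_trans less_imp_le)
    next
      case False
      then have "3 * alpha * k \<le> (alpha + 1) * k" using al by (intro mult_right_mono) auto
      then show ?thesis using h3 by simp
    qed
    then show ?thesis by (simp add: k_def j_def)
  qed
  have dBz: "((\<lambda>y. w y powr (5 - n) / (w y powr (4 - n) + e) * zx y) has_real_derivative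
      deriv (\<lambda>y. w y powr (5 - n) / (w y powr (4 - n) + e) * zx y) x) (at x)" if "x \<in> {lo<..<hi}" for x
  proof -
    have d5: "((\<lambda>y. w y powr (5 - n)) has_real_derivative (5 - n) * w x powr (5 - n - of_nat 1) * wx x) (at x)"
      by (rule DERIV_fun_powr[OF i1[OF that] wpos[OF that]])
    have d4: "((\<lambda>y. w y powr (4 - n)) has_real_derivative (4 - n) * w x powr (4 - n - of_nat 1) * wx x) (at x)"
      by (rule DERIV_fun_powr[OF i1[OF that] wpos[OF that]])
    have d4e: "((\<lambda>y. w y powr (4 - n) + e) has_real_derivative (4 - n) * w x powr (4 - n - of_nat 1) * wx x + 0) (at x)"
      by (rule DERIV_add[OF d4 DERIV_const])
    have "((\<lambda>y. w y powr (5 - n) / (w y powr (4 - n) + e) * zx y) has_real_derivative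
       ((5 - n) * w x powr (5 - n - of_nat 1) * wx x * (w x powr (4 - n) + e)
         - w x powr (5 - n) * ((4 - n) * w x powr (4 - n - of_nat 1) * wx x + 0)) /
         ((w x powr (4 - n) + e) * (w x powr (4 - n) + e)) * zx x
       + zxx x * (w x powr (5 - n) / (w x powr (4 - n) + e))) (at x)"
      (is "(?f has_real_derivative ?d) _")
      by (rule DERIV_mult[OF DERIV_divide[OF d5 d4e den1] iz[OF that]])
    then have h: "(?f has_real_derivative ?d) (at x)" .
    show ?thesis by (subst DERIV_imp_deriv[OF h]) (rule h)
  qed
  have cBz: "continuous_on S (\<lambda>y. w y powr (5 - n) / (w y powr (4 - n) + e) * zx y)"
    using cs pos' den1 by (auto intro!: continuous_intros)
  have E8a: "integral S (\<lambda>x. deriv (\<lambda>y. w y powr (5 - n) / (w y powr (4 - n) + e) * zx y) x * wxx x)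
     = (w hi powr (5 - n) / (w hi powr (4 - n) + e) * zx hi) * wxx hi
       - (w lo powr (5 - n) / (w lo powr (4 - n) + e) * zx lo) * wxx lo
       - integral S (\<lambda>x. (w x powr (5 - n) / (w x powr (4 - n) + e) * zx x) * wxxx x)"
    unfolding S_def
    by (rule ibp(2)[where f="\<lambda>y. w y powr (5 - n) / (w y powr (4 - n) + e) * zx y" and g=wxx
          and f'="\<lambda>x. deriv (\<lambda>y. w y powr (5 - n) / (w y powr (4 - n) + e) * zx y) x" and g'=wxxx];
        use lohi' cs cBz dBz i3 pos' den1 in \<open>auto simp: S_def intro!: cint continuous_intros\<close>)
  have E8: "integral S (\<lambda>x. deriv (\<lambda>y. w y powr (5 - n) / (w y powr (4 - n) + e) * zx y) x * wxx x)
     = - integral S (\<lambda>x. wxxx x * (B x * zx x))"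
  proof -
    have "(\<lambda>x. (w x powr (5 - n) / (w x powr (4 - n) + e) * zx x) * wxxx x) = (\<lambda>x. wxxx x * (B x * zx x))"
      by (rule ext) (simp add: B_def)
    then show ?thesis using E8a bc by simp
  qed
  define Gd where "Gd = (\<lambda>x. 9 * (w x)\<^sup>2 * ((w x)\<^sup>2 + e) / (3 * (w x)\<^sup>2 + e)\<^sup>2)"
  have dG: "(G has_real_derivative Gd x * wx x) (at x)" if "x \<in> {lo<..<hi}" for x
  proof -
    have d3w: "((\<lambda>y. 3 * w y ^ 3) has_real_derivative 3 * (3 * (w x)\<^sup>2 * wx x)) (at x)"
      using i1[OF that] by (auto intro!: derivative_eq_intros)
    have d2w: "((\<lambda>y. 3 * (w y)\<^sup>2 + e) has_real_derivative 3 * (2 * w x * wx x)) (at x)"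
      using i1[OF that] by (auto intro!: derivative_eq_intros)
    show ?thesis unfolding G_def
    proof (rule DERIV_cong[OF DERIV_divide[OF d3w d2w den2]])
      show "(3 * (3 * (w x)\<^sup>2 * wx x) * (3 * (w x)\<^sup>2 + e) - 3 * w x ^ 3 * (3 * (2 * w x * wx x))) /
          ((3 * (w x)\<^sup>2 + e) * (3 * (w x)\<^sup>2 + e)) = Gd x * wx x"
      proof -
        have num: "3 * (3 * (w x)\<^sup>2 * wx x) * (3 * (w x)\<^sup>2 + e) - 3 * w x ^ 3 * (3 * (2 * w x * wx x))
            = 9 * (w x)\<^sup>2 * ((w x)\<^sup>2 + e) * wx x"
          by (simp add: power2_eq_square power3_eq_cube algebra_simps)
        show ?thesis unfolding num Gd_def by (simp add: power2_eq_square)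
      qed
    qed
  qed
  have cGd: "continuous_on S Gd" unfolding Gd_def using cs den2 by (auto intro!: continuous_intros simp: power2_eq_square)
  have dGf: "((\<lambda>y. G y * (lam - w y)) has_real_derivative (Gd x * (lam - w x) - G x) * wx x) (at x)"
    if "x \<in> {lo<..<hi}" for x
    by (rule DERIV_cong[OF DERIV_mult[OF dG[OF that] DERIV_diff[OF DERIV_const i1[OF that]]]])
       (simp add: algebra_simps)
  have E9a: "integral S (\<lambda>x. (Gd x * (lam - w x) - G x) * wx x * wx x)
      = G hi * (lam - w hi) * wx hi - G lo * (lam - w lo) * wx lo - integral S (\<lambda>x. G x * (lam - w x) * wxx x)"
    unfolding S_def
    by (rule ibp(2)[where f="\<lambda>y. G y * (lam - w y)" and g=wx
          and f'="\<lambda>x. (Gd x * (lam - w x) - G x) * wx x" and g'=wxx];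
        use lohi' cs cGd dGf i2 in \<open>auto simp: S_def intro!: cint continuous_intros\<close>)
  have E9: "integral S (\<lambda>x. (Gd x * (lam - w x) - G x) * wx x * wx x) = - integral S (\<lambda>x. G x * (lam - w x) * wxx x)"
    using E9a bc by simp
  have E10: "integral S (\<lambda>x. G x * (lam - w x + c x) * wxx x)
     = integral S (\<lambda>x. G x * (lam - w x) * wxx x) + integral S (\<lambda>x. G x * c x * wxx x)"
  proof -
    have "(\<lambda>x. G x * (lam - w x + c x) * wxx x) = (\<lambda>x. 1 * (G x * (lam - w x) * wxx x) + 1 * (G x * c x * wxx x))"
      by (rule ext) (simp add: algebra_simps)
    then show ?thesis
      using lin2[of "\<lambda>x. G x * (lam - w x) * wxx x" S "\<lambda>x. G x * c x * wxx x" 1 1] cs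
      by (simp add: cintS continuous_intros)
  qed
  have E11: "1 * integral S (\<lambda>x. (Gd x * (lam - w x) - G x) * wx x * wx x)
      + (-1) * integral S (\<lambda>x. G x * c x * wxx x) + (-(D / 2)) * integral S (\<lambda>x. wxx x * wxx x)
      \<le> (3 * lam) * integral S (\<lambda>x. wx x * wx x) + (1 / (2 * D)) * integral S (\<lambda>x. (w x)\<^sup>2 * (c x)\<^sup>2)"
  proof -
    have "integral S (\<lambda>x. 1 * ((Gd x * (lam - w x) - G x) * wx x * wx x)
      + (-1) * (G x * c x * wxx x) + (-(D / 2)) * (wxx x * wxx x))
      \<le> integral S (\<lambda>x. (3 * lam) * (wx x * wx x) + (1 / (2 * D)) * ((w x)\<^sup>2 * (c x)\<^sup>2))"
    proof (rule integral_le)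
      show "(\<lambda>x. 1 * ((Gd x * (lam - w x) - G x) * wx x * wx x)
        + (-1) * (G x * c x * wxx x) + (-(D / 2)) * (wxx x * wxx x)) integrable_on S"
        using cs cGd by (auto intro!: cintS continuous_intros)
      show "(\<lambda>x. (3 * lam) * (wx x * wx x) + (1 / (2 * D)) * ((w x)\<^sup>2 * (c x)\<^sup>2)) integrable_on S"
        using cs Dp by (auto intro!: cintS continuous_intros)
      fix x assume x: "x \<in> S"
      have wx0: "w x > 0" using pos x by (auto simp: S_def)
      define W where "W = w x"
      have Q: "3 * W\<^sup>2 + e > 0" using ep by (simp add: add_nonneg_pos)
      have Gd0: "0 \<le> Gd x" using ep by (simp add: Gd_def)
      have Gd3: "Gd x \<le> 3"
      proof -
        have "9 * W\<^sup>2 * (W\<^sup>2 + e) \<le> 3 * (3 * W\<^sup>2 + e)\<^sup>2"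
        proof -
          have "3 * (3 * W\<^sup>2 + e)\<^sup>2 - 9 * W\<^sup>2 * (W\<^sup>2 + e) = 18 * (W\<^sup>2)\<^sup>2 + 9 * e * W\<^sup>2 + 3 * e\<^sup>2"
            by (simp add: power2_eq_square algebra_simps)
          moreover have "0 \<le> 18 * (W\<^sup>2)\<^sup>2 + 9 * e * W\<^sup>2 + 3 * e\<^sup>2" using ep by simp
          ultimately show ?thesis by linarith
        qed
        then show ?thesis using Q unfolding Gd_def W_def[symmetric] by (simp add: divide_le_eq)
      qed
      have G0: "0 \<le> G x" using wx0 Q by (simp add: G_def W_def)
      have Gw: "G x \<le> w x"
      proof -
        have "3 * W ^ 3 \<le> W * (3 * W\<^sup>2 + e)" using wx0 ep by (simp add: W_def power2_eq_square power3_eq_cube algebra_simps)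
        then show ?thesis using Q unfolding G_def W_def[symmetric] by (simp add: divide_le_eq)
      qed
      have h1: "(Gd x * (lam - w x) - G x) * wx x * wx x \<le> (3 * lam) * (wx x * wx x)"
      proof -
        have "Gd x * (lam - w x) - G x \<le> 3 * lam"
        proof -
          have "Gd x * (lam - w x) = Gd x * lam - Gd x * w x" by (simp add: algebra_simps)
          moreover have "Gd x * lam \<le> 3 * lam" using Gd3 lam by simp
          moreover have "Gd x * w x \<ge> 0" using Gd0 wx0 by simp
          ultimately show ?thesis using G0 by linarith
        qed
        then have "(Gd x * (lam - w x) - G x) * (wx x * wx x) \<le> (3 * lam) * (wx x * wx x)"
          by (rule mult_right_mono) simp
        then show ?thesis by (simp add: mult.assoc)
      qed
      define a where "a = G x * c x"
      define b where "b = wxx x"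
      have h2: "- (a * b) \<le> D / 2 * (b * b) + a\<^sup>2 / (2 * D)"
      proof -
        have "D / 2 * (b * b) + a\<^sup>2 / (2 * D) + a * b = (a + D * b)\<^sup>2 / (2 * D)"
          using Dp by (simp add: field_simps power2_eq_square)
        moreover have "(a + D * b)\<^sup>2 / (2 * D) \<ge> 0" using Dp by simp
        ultimately show ?thesis by linarith
      qed
      have h3: "a\<^sup>2 \<le> (w x)\<^sup>2 * (c x)\<^sup>2"
      proof -
        have "(G x)\<^sup>2 \<le> (w x)\<^sup>2" using G0 Gw by (intro power_mono) auto
        then have "(G x)\<^sup>2 * (c x)\<^sup>2 \<le> (w x)\<^sup>2 * (c x)\<^sup>2" by (rule mult_right_mono) simp
        then show ?thesis by (simp add: a_def power_mult_distrib)
      qed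
      have h4: "a\<^sup>2 / (2 * D) \<le> (w x)\<^sup>2 * (c x)\<^sup>2 / (2 * D)" using h3 Dp by (simp add: divide_right_mono)
      show "1 * ((Gd x * (lam - w x) - G x) * wx x * wx x) + (-1) * (G x * c x * wxx x) + (-(D / 2)) * (wxx x * wxx x)
          \<le> (3 * lam) * (wx x * wx x) + (1 / (2 * D)) * ((w x)\<^sup>2 * (c x)\<^sup>2)"
        using h1 h2 h4 unfolding a_def b_def by simp
    qed
    moreover have "integral S (\<lambda>x. 1 * ((Gd x * (lam - w x) - G x) * wx x * wx x)
      + (-1) * (G x * c x * wxx x) + (-(D / 2)) * (wxx x * wxx x))
      = 1 * integral S (\<lambda>x. (Gd x * (lam - w x) - G x) * wx x * wx x)
      + (-1) * integral S (\<lambda>x. G x * c x * wxx x) + (-(D / 2)) * integral S (\<lambda>x. wxx x * wxx x)"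
      by (rule lin3) (use cs cGd in \<open>auto intro!: cintS continuous_intros\<close>)
    moreover have "integral S (\<lambda>x. (3 * lam) * (wx x * wx x) + (1 / (2 * D)) * ((w x)\<^sup>2 * (c x)\<^sup>2))
      = (3 * lam) * integral S (\<lambda>x. wx x * wx x) + (1 / (2 * D)) * integral S (\<lambda>x. (w x)\<^sup>2 * (c x)\<^sup>2)"
      by (rule lin2) (use cs Dp in \<open>auto intro!: cintS continuous_intros\<close>)
    ultimately show ?thesis by simp
  qed
  have C1: "integral S (\<lambda>x. w x ^ 4 / (w x powr (4 - n) + e) * (wxxx x)\<^sup>2) = integral S (\<lambda>x. A x * (wxxx x * wxxx x))"
    by (simp add: A_def power2_eq_square)
  have C2: "integral S (\<lambda>x. (wxx x)\<^sup>2) = integral S (\<lambda>x. wxx x * wxx x)" by (simp add: power2_eq_square)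
  have C3: "integral S (\<lambda>x. (wx x)\<^sup>2) = integral S (\<lambda>x. wx x * wx x)" by (simp add: power2_eq_square)
  have F1: "D * integral S (\<lambda>x. wxxx x * wx x) = - (D * integral S (\<lambda>x. wxx x * wxx x))" using E4 by simp
  have F2: "(sg * chi) * integral S (\<lambda>x. wxxx x * (B x * zx x))
     = - sg * chi * integral S (\<lambda>x. deriv (\<lambda>y. w y powr (5 - n) / (w y powr (4 - n) + e) * zx y) x * wxx x)"
    using E8 by simp
  have F3: "e powr (alpha / 2) * integral S (\<lambda>x. wxxx x * (P x * wx x)) \<le> 0"
    unfolding E5 using X2 by (simp add: mult_nonneg_nonpos)
  have F4: "(- e) * integral S (\<lambda>x. A x * (wxxx x * wxxx x)) = - (e * integral S (\<lambda>x. A x * (wxxx x * wxxx x)))" by simp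
  have goal: "- integral S (\<lambda>x. wt x * wxx x)
     + e * integral S (\<lambda>x. w x ^ 4 / (w x powr (4 - n) + e) * (wxxx x)\<^sup>2)
     + D / 2 * integral S (\<lambda>x. (wxx x)\<^sup>2)
     \<le> - sg * chi * integral S (\<lambda>x. deriv (\<lambda>y. w y powr (5 - n) / (w y powr (4 - n) + e) * zx y) x * wxx x)
       + 3 * lam * integral S (\<lambda>x. (wx x)\<^sup>2)
       + 1 / (2 * D) * integral S (\<lambda>x. (w x)\<^sup>2 * (c x)\<^sup>2)"
    unfolding C1 C2 C3 using E1 E2 E3 F1 F2 F3 F4 E9 E10 E11 by linarith
  then show ?thesis by (simp add: S_def)
qed



theorem lemma2p5:
  fixes lo hi alpha D1 D2 a1 a2 lam1 lam2 chi1 chi2 n1 n2 e T :: real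
    and u0 v0 u0' v0' :: "real \<Rightarrow> real"
    and u0e v0e :: "real \<Rightarrow> real \<Rightarrow> real"
    and u ux uxx uxxx uxxxx ut v vx vxx vxxx vxxxx vt :: "real \<Rightarrow> real \<Rightarrow> real"
  assumes "lo < hi"
    and "D1 > 0" "D2 > 0" "a1 > 0" "a2 > 0" "lam1 > 0" "lam2 > 0" "chi1 > 0" "chi2 > 0"
    and "0 < alpha" "alpha \<le> 1/2"
    and "0 < n1" "n1 < 4" "0 < n2" "n2 < 4"
    and "IE_component lo hi u0 u0' u0e" "IE_component lo hi v0 v0' v0e"
    and "0 < e" "e < 1"
    and "T > 0"
    and "approx_solution lo hi alpha e n1 n2 D1 D2 a1 a2 lam1 lam2 chi1 chi2 T (u0e e) (v0e e)
           u ux uxx uxxx uxxxx ut v vx vxx vxxx vxxxx vt"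
    and "0 < t" "t < T"
  shows "(\<exists>Du. ((\<lambda>s. integral {lo..hi} (\<lambda>x. (ux x s)\<^sup>2)) has_real_derivative Du) (at t) \<and>
            Du / 2
            + e * integral {lo..hi} (\<lambda>x. (u x t) ^ 4 / ((u x t) powr (4 - n1) + e) * (uxxx x t)\<^sup>2)
            + D1 / 2 * integral {lo..hi} (\<lambda>x. (uxx x t)\<^sup>2)
          \<le> chi1 * integral {lo..hi} (\<lambda>x.
                deriv (\<lambda>y. (u y t) powr (5 - n1) / ((u y t) powr (4 - n1) + e) * vx y t) x
                * uxx x t)
            + 3 * lam1 * integral {lo..hi} (\<lambda>x. (ux x t)\<^sup>2)
            + a1\<^sup>2 / (2 * D1) * integral {lo..hi} (\<lambda>x. (u x t)\<^sup>2 * (v x t)\<^sup>2))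
       \<and> (\<exists>Dv. ((\<lambda>s. integral {lo..hi} (\<lambda>x. (vx x s)\<^sup>2)) has_real_derivative Dv) (at t) \<and>
            Dv / 2
            + e * integral {lo..hi} (\<lambda>x. (v x t) ^ 4 / ((v x t) powr (4 - n2) + e) * (vxxx x t)\<^sup>2)
            + D2 / 2 * integral {lo..hi} (\<lambda>x. (vxx x t)\<^sup>2)
          \<le> - chi2 * integral {lo..hi} (\<lambda>x.
                deriv (\<lambda>y. (v y t) powr (5 - n2) / ((v y t) powr (4 - n2) + e) * ux y t) x
                * vxx x t)
            + 3 * lam2 * integral {lo..hi} (\<lambda>x. (vx x t)\<^sup>2)
            + a2\<^sup>2 / (2 * D2) * integral {lo..hi} (\<lambda>x. (u x t)\<^sup>2 * (v x t)\<^sup>2))"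
proof -
  note A = assms
  have sol: "C41_on lo hi T u ux uxx uxxx uxxxx ut" "C41_on lo hi T v vx vxx vxxx vxxxx vt"
    "\<forall>x\<in>{lo..hi}. \<forall>t\<in>{0..<T}. u x t > 0 \<and> v x t > 0"
    "\<forall>t\<in>{0<..<T}. ux lo t = 0 \<and> ux hi t = 0 \<and> vx lo t = 0 \<and> vx hi t = 0 \<and>
        uxxx lo t = 0 \<and> uxxx hi t = 0 \<and> vxxx lo t = 0 \<and> vxxx hi t = 0"
    "\<forall>x\<in>{lo<..<hi}. \<forall>t\<in>{0<..<T}.
        ((\<lambda>y. approx_flux e alpha n1 D1 chi1 (-1) (u y t) (ux y t) (uxxx y t) (vx y t))
           has_real_derivative
           (ut x t - approx_reaction e (u x t) (lam1 - u x t + a1 * v x t))) (at x) \<and>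
        ((\<lambda>y. approx_flux e alpha n2 D2 chi2 1 (v y t) (vx y t) (vxxx y t) (ux y t))
           has_real_derivative
           (vt x t - approx_reaction e (v x t) (lam2 - v x t - a2 * u x t))) (at x)"
    using A(21) unfolding approx_solution_def by blast+
  have tT: "t \<in> {0<..<T}" using A(22,23) by auto
  have Cu: "\<forall>s\<in>{0<..<T}. \<forall>x\<in>{lo..hi}.
        ((\<lambda>y. u y s) has_real_derivative ux x s) (at x within {lo..hi}) \<and>
        ((\<lambda>y. ux y s) has_real_derivative uxx x s) (at x within {lo..hi}) \<and>
        ((\<lambda>y. uxx y s) has_real_derivative uxxx x s) (at x within {lo..hi}) \<and>
        ((\<lambda>y. uxxx y s) has_real_derivative uxxxx x s) (at x within {lo..hi}) \<and>
        ((\<lambda>s. u x s) has_real_derivative ut x s) (at s)"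
    "continuous_on ({lo..hi} \<times> {0<..<T}) (\<lambda>(x, s). uxx x s)"
    "continuous_on ({lo..hi} \<times> {0<..<T}) (\<lambda>(x, s). ut x s)"
    using sol(1) unfolding C41_on_def by auto
  have Cv: "\<forall>s\<in>{0<..<T}. \<forall>x\<in>{lo..hi}.
        ((\<lambda>y. v y s) has_real_derivative vx x s) (at x within {lo..hi}) \<and>
        ((\<lambda>y. vx y s) has_real_derivative vxx x s) (at x within {lo..hi}) \<and>
        ((\<lambda>y. vxx y s) has_real_derivative vxxx x s) (at x within {lo..hi}) \<and>
        ((\<lambda>y. vxxx y s) has_real_derivative vxxxx x s) (at x within {lo..hi}) \<and>
        ((\<lambda>s. v x s) has_real_derivative vt x s) (at s)"
    "continuous_on ({lo..hi} \<times> {0<..<T}) (\<lambda>(x, s). vxx x s)"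
    "continuous_on ({lo..hi} \<times> {0<..<T}) (\<lambda>(x, s). vt x s)"
    using sol(2) unfolding C41_on_def by auto
  have TDu: "((\<lambda>s. integral {lo..hi} (\<lambda>x. (ux x s)\<^sup>2)) has_real_derivative
           (-2 * integral {lo..hi} (\<lambda>x. ut x t * uxx x t))) (at t)"
    by (rule time_deriv[OF A(1) A(22) A(23)]) (use Cu sol(4) in auto)
  have TDv: "((\<lambda>s. integral {lo..hi} (\<lambda>x. (vx x s)\<^sup>2)) has_real_derivative
           (-2 * integral {lo..hi} (\<lambda>x. vt x t * vxx x t))) (at t)"
    by (rule time_deriv[OF A(1) A(22) A(23)]) (use Cv sol(4) in auto)
  have cv: "continuous_on {lo..hi} (\<lambda>y. v y t)" using Cv(1) tT by (intro deriv_cont_on) auto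
  have cu: "continuous_on {lo..hi} (\<lambda>y. u y t)" using Cu(1) tT by (intro deriv_cont_on) auto
  have cuxxx: "continuous_on {lo..hi} (\<lambda>y. uxxx y t)" using Cu(1) tT by (intro deriv_cont_on) auto
  have cvxxx: "continuous_on {lo..hi} (\<lambda>y. vxxx y t)" using Cv(1) tT by (intro deriv_cont_on) auto
  have SPu: "- integral {lo..hi} (\<lambda>x. ut x t * uxx x t)
     + e * integral {lo..hi} (\<lambda>x. u x t ^ 4 / (u x t powr (4 - n1) + e) * (uxxx x t)\<^sup>2)
     + D1 / 2 * integral {lo..hi} (\<lambda>x. (uxx x t)\<^sup>2)
     \<le> - (-1) * chi1 * integral {lo..hi} (\<lambda>x. deriv (\<lambda>y. u y t powr (5 - n1) / (u y t powr (4 - n1) + e) * vx y t) x * uxx x t)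
       + 3 * lam1 * integral {lo..hi} (\<lambda>x. (ux x t)\<^sup>2)
       + 1 / (2 * D1) * integral {lo..hi} (\<lambda>x. (u x t)\<^sup>2 * (a1 * v x t)\<^sup>2)"
    by (rule spatial[where w="\<lambda>y. u y t" and wx="\<lambda>y. ux y t" and wxx="\<lambda>y. uxx y t" and wxxx="\<lambda>y. uxxx y t"
          and zx="\<lambda>y. vx y t" and zxx="\<lambda>y. vxx y t" and c="\<lambda>y. a1 * v y t"
          and r="\<lambda>y. lam1 - u y t + a1 * v y t" and wt="\<lambda>y. ut y t"])
       (use A Cu Cv sol tT cv cuxxx in \<open>auto intro!: continuous_intros\<close>)
  have SPv: "- integral {lo..hi} (\<lambda>x. vt x t * vxx x t)
     + e * integral {lo..hi} (\<lambda>x. v x t ^ 4 / (v x t powr (4 - n2) + e) * (vxxx x t)\<^sup>2)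
     + D2 / 2 * integral {lo..hi} (\<lambda>x. (vxx x t)\<^sup>2)
     \<le> - 1 * chi2 * integral {lo..hi} (\<lambda>x. deriv (\<lambda>y. v y t powr (5 - n2) / (v y t powr (4 - n2) + e) * ux y t) x * vxx x t)
       + 3 * lam2 * integral {lo..hi} (\<lambda>x. (vx x t)\<^sup>2)
       + 1 / (2 * D2) * integral {lo..hi} (\<lambda>x. (v x t)\<^sup>2 * (- (a2 * u x t))\<^sup>2)"
    by (rule spatial[where w="\<lambda>y. v y t" and wx="\<lambda>y. vx y t" and wxx="\<lambda>y. vxx y t" and wxxx="\<lambda>y. vxxx y t"
          and zx="\<lambda>y. ux y t" and zxx="\<lambda>y. uxx y t" and c="\<lambda>y. - (a2 * u y t)"
          and r="\<lambda>y. lam2 - v y t - a2 * u y t" and wt="\<lambda>y. vt y t"])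
       (use A Cu Cv sol tT cu cvxxx in \<open>auto intro!: continuous_intros\<close>)
  have Iu: "integral {lo..hi} (\<lambda>x. (u x t)\<^sup>2 * (a1 * v x t)\<^sup>2) = a1\<^sup>2 * integral {lo..hi} (\<lambda>x. (u x t)\<^sup>2 * (v x t)\<^sup>2)"
  proof -
    have "(\<lambda>x. (u x t)\<^sup>2 * (a1 * v x t)\<^sup>2) = (\<lambda>x. a1\<^sup>2 * ((u x t)\<^sup>2 * (v x t)\<^sup>2))"
      by (rule ext) (simp add: power_mult_distrib)
    then show ?thesis by simp
  qed
  have Iv: "integral {lo..hi} (\<lambda>x. (v x t)\<^sup>2 * (- (a2 * u x t))\<^sup>2) = a2\<^sup>2 * integral {lo..hi} (\<lambda>x. (u x t)\<^sup>2 * (v x t)\<^sup>2)"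
  proof -
    have "(\<lambda>x. (v x t)\<^sup>2 * (- (a2 * u x t))\<^sup>2) = (\<lambda>x. a2\<^sup>2 * ((u x t)\<^sup>2 * (v x t)\<^sup>2))"
      by (rule ext) (simp add: power_mult_distrib)
    then show ?thesis by simp
  qed
  show ?thesis
  proof (intro conjI exI)
    show "((\<lambda>s. integral {lo..hi} (\<lambda>x. (ux x s)\<^sup>2)) has_real_derivative
           (-2 * integral {lo..hi} (\<lambda>x. ut x t * uxx x t))) (at t)" by (rule TDu)
    show "((\<lambda>s. integral {lo..hi} (\<lambda>x. (vx x s)\<^sup>2)) has_real_derivative
           (-2 * integral {lo..hi} (\<lambda>x. vt x t * vxx x t))) (at t)" by (rule TDv)
    show "-2 * integral {lo..hi} (\<lambda>x. ut x t * uxx x t) / 2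
            + e * integral {lo..hi} (\<lambda>x. (u x t) ^ 4 / ((u x t) powr (4 - n1) + e) * (uxxx x t)\<^sup>2)
            + D1 / 2 * integral {lo..hi} (\<lambda>x. (uxx x t)\<^sup>2)
          \<le> chi1 * integral {lo..hi} (\<lambda>x.
                deriv (\<lambda>y. (u y t) powr (5 - n1) / ((u y t) powr (4 - n1) + e) * vx y t) x
                * uxx x t)
            + 3 * lam1 * integral {lo..hi} (\<lambda>x. (ux x t)\<^sup>2)
            + a1\<^sup>2 / (2 * D1) * integral {lo..hi} (\<lambda>x. (u x t)\<^sup>2 * (v x t)\<^sup>2)"
      using SPu unfolding Iu by simp
    show "-2 * integral {lo..hi} (\<lambda>x. vt x t * vxx x t) / 2
            + e * integral {lo..hi} (\<lambda>x. (v x t) ^ 4 / ((v x t) powr (4 - n2) + e) * (vxxx x t)\<^sup>2)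
            + D2 / 2 * integral {lo..hi} (\<lambda>x. (vxx x t)\<^sup>2)
          \<le> - chi2 * integral {lo..hi} (\<lambda>x.
                deriv (\<lambda>y. (v y t) powr (5 - n2) / ((v y t) powr (4 - n2) + e) * ux y t) x
                * vxx x t)
            + 3 * lam2 * integral {lo..hi} (\<lambda>x. (vx x t)\<^sup>2)
            + a2\<^sup>2 / (2 * D2) * integral {lo..hi} (\<lambda>x. (u x t)\<^sup>2 * (v x t)\<^sup>2)"
      using SPv unfolding Iv by simp
  qed
qed

end
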